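(* Let $F$ be a field of characteristic $0$ and let $f\in F[X]$ be monic of degree $n\geq 1$. Let $K$ be a splitting field of $f$ over $F$, let $S(f)$ be the set of roots of $f$ in $K$, and for $\alpha\in S(f)$ let $m(\alpha)$ be the multiplicity of $\alpha$ as a root of $f$. Let $M_f\in K[X]$ be the unique polynomial of degree less than $|S(f)|$ satisfying $M_f(\alpha)=m(\alpha)$ for all $\alpha\in S(f)$. Set $f_0=f/\gcd(f,f')$, $s=\deg(f_0)$ and $P=f'/\gcd(f,f')$. Then there exist unique $g\in F_s[X]$ and $h\in F[X]$ such that $f_0'g+f_0h=1$. Moreover, for these $P$, $f_0$ and $g$, $$[M_f]=P(C_{f_0})\,[g].$$
   Context: Here $\gcd$ denotes the monic greatest common divisor and $f'$ the formal derivative. For a positive integer $s$, $F_s[X]$ denotes the subspace of $F[X]$ of polynomials of degree less than $s$, with basis $1,X,\dots,X^{s-1}$; for a polynomial $R$ of degree less than $s$ (with coefficients in $F$ or $K$), $[R]$ denotes the column vector of its coordinates $(r_0,\dots,r_{s-1})^T$ relative to $1,X,\dots,X^{s-1}$, where $R=r_0+r_1X+\dots+r_{s-1}X^{s-1}$. For a monic polynomial $q=q_0+q_1X+\cdots+q_{s-1}X^{s-1}+X^s$ of positive degree $s$, its companion matrix $C_q\in M_s(F)$ is the $s\times s$ matrix with $1$'s on the subdiagonal (entries $(i+1,i)$ for $i=1,\dots,s-1$), last column $(-q_0,-q_1,\dots,-q_{s-1})^T$, and all other entries $0$. For a polynomial $R$ and square matrix $A$, $R(A)$ denotes evaluation of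 $R$ at $A$. *)

theory Defs
  imports "HOL-Computational_Algebra.Polynomial_Factorial" "Jordan_Normal_Form.Matrix"
begin

definition is_field_hom :: "('a::field \<Rightarrow> 'b::field) \<Rightarrow> bool" where
  "is_field_hom \<phi> \<longleftrightarrow> \<phi> 1 = 1 \<and> (\<forall>x y. \<phi> (x + y) = \<phi> x + \<phi> y) \<and> (\<forall>x y. \<phi> (x * y) = \<phi> x * \<phi> y)"

definition is_subfield :: "'b::field set \<Rightarrow> bool" where
  "is_subfield T \<longleftrightarrow> 0 \<in> T \<and> 1 \<in> T \<and> (\<forall>x\<in>T. \<forall>y\<in>T. x + y \<in> T \<and> x * y \<in> T)
     \<and> (\<forall>x\<in>T. - x \<in> T \<and> inverse x \<in> T)"

definition root_set :: "('a::field \<Rightarrow> 'b::field) \<Rightarrow> 'a poly \<Rightarrow> 'b set" where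
  "root_set \<phi> f = {\<alpha>. poly (map_poly \<phi> f) \<alpha> = 0}"

definition is_splitting_field :: "('a::field \<Rightarrow> 'b::field) \<Rightarrow> 'a poly \<Rightarrow> bool" where
  "is_splitting_field \<phi> f \<longleftrightarrow> is_field_hom \<phi>
     \<and> (\<exists>rs. map_poly \<phi> f = Polynomial.smult (\<phi> (lead_coeff f)) (\<Prod>r\<leftarrow>rs. [:- r, 1:]))
     \<and> (\<forall>T. is_subfield T \<and> range \<phi> \<subseteq> T \<and> root_set \<phi> f \<subseteq> T \<longrightarrow> T = UNIV)"

definition companion_mat :: "'a::comm_ring_1 poly \<Rightarrow> 'a mat" where
  "companion_mat q = (let s = degree q in
     mat s s (\<lambda>(i, j). if j = s - 1 then - coeff q i else if i = j + 1 then 1 else 0))"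

definition poly_mat_eval :: "'a::comm_ring_1 poly \<Rightarrow> nat \<Rightarrow> 'a mat \<Rightarrow> 'a mat" where
  "poly_mat_eval R n A = foldr (\<lambda>c M. c \<cdot>\<^sub>m 1\<^sub>m n + A * M) (coeffs R) (0\<^sub>m n n)"

definition coord_vec :: "nat \<Rightarrow> 'a::zero poly \<Rightarrow> 'a vec" where
  "coord_vec s R = vec s (\<lambda>i. coeff R i)"

end

theory Submission
  imports Defs
begin

lemma fh: assumes "is_field_hom \<phi>" shows "field_hom \<phi>"
proof -
  have a: "\<phi> (x + y) = \<phi> x + \<phi> y" "\<phi> (x * y) = \<phi> x * \<phi> y" "\<phi> 1 = 1" for x y
    using assms unfolding is_field_hom_def by auto
  have "\<phi> 0 = \<phi> 0 + \<phi> 0" using a(1)[of 0 0] by simp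
  hence z: "\<phi> 0 = 0" by (metis add_cancel_right_right)
  show ?thesis by unfold_locales (auto simp: a z)
qed

context field_hom begin
lemma hom_eq0: "hom x = 0 \<longleftrightarrow> x = 0"
proof
  assume h: "hom x = 0"
  show "x = 0"
  proof (rule ccontr)
    assume "x \<noteq> 0"
    hence "hom (x * inverse x) = 1" by simp
    hence "hom x * hom (inverse x) = 1" by (simp only: hom_mult)
    thus False using h by simp
  qed
qed simp

lemma mp_add: "map_poly hom (p + q) = map_poly hom p + map_poly hom q"
  by (rule poly_eqI) (simp add: coeff_map_poly hom_add)
lemma hd: "hom (a - b) = hom a - hom b"
  by (metis diff_add_cancel hom_add add_diff_cancel_right')
lemma mp_diff: "map_poly hom (p - q) = map_poly hom p - map_poly hom q"
  by (rule poly_eqI) (simp add: coeff_map_poly hd)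
lemma mp_mult: "map_poly hom (p * q) = map_poly hom p * map_poly hom q"
  by (rule poly_eqI) (simp add: coeff_map_poly coeff_mult hom_sum hom_mult)
lemma mp_pderiv: "map_poly hom (pderiv p) = pderiv (map_poly hom p)"
  by (rule poly_eqI) (simp add: coeff_map_poly coeff_pderiv hom_mult hom_of_nat del: of_nat_Suc)
lemma mp_dvd: "p dvd q \<Longrightarrow> map_poly hom p dvd map_poly hom q"
  by (auto elim!: dvdE simp: mp_mult)
lemma mp_deg: "degree (map_poly hom p) = degree p"
  by (rule degree_map_poly) (simp add: hom_eq0)
lemma mp_1: "map_poly hom 1 = 1" by simp
end

lemma split_deg_le:
  fixes p :: "'b::field poly"
  shows "p dvd prod_list (map (\<lambda>r. [:-r,1:]) rs) \<Longrightarrow> p \<noteq> 0 \<Longrightarrow>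
    (\<forall>\<alpha>. poly p \<alpha> = 0 \<longrightarrow> poly (pderiv p) \<alpha> \<noteq> 0) \<Longrightarrow> degree p \<le> card {\<alpha>. poly p \<alpha> = 0}"
proof (induction rs arbitrary: p)
  case Nil
  then have "is_unit p" by simp
  then show ?case using is_unit_iff_degree[of p] Nil by simp
next
  case (Cons r rs)
  let ?L = "[:-r,1:]"
  let ?Q = "prod_list (map (\<lambda>r. [:-r,1:]) rs)"
  from Cons.prems(1) obtain k where k: "?L * ?Q = p * k" by (auto elim: dvdE)
  show ?case
  proof (cases "poly p r = 0")
    case True
    then obtain p1 where p1: "p = ?L * p1" using dvd_iff_poly_eq_0[of "-r" p] by (auto elim: dvdE)
    have L0: "?L \<noteq> 0" by simp
    have "?L * ?Q = ?L * (p1 * k)" using k p1 by (metis mult.assoc)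
    hence "?Q = p1 * k" using L0 mult_left_cancel by blast
    hence d: "p1 dvd ?Q" by simp
    have p10: "p1 \<noteq> 0" using p1 Cons.prems(2) by auto
    have pL: "pderiv ?L = 1" by (simp add: pderiv_pCons)
    have pd: "pderiv p = ?L * pderiv p1 + p1" unfolding p1 pderiv_mult pL by simp
    have simp1: "\<forall>\<alpha>. poly p1 \<alpha> = 0 \<longrightarrow> poly (pderiv p1) \<alpha> \<noteq> 0"
    proof (intro allI impI)
      fix \<alpha> assume "poly p1 \<alpha> = 0"
      hence "poly p \<alpha> = 0" by (simp add: p1)
      hence "poly (pderiv p) \<alpha> \<noteq> 0" using Cons.prems(3) by blast
      thus "poly (pderiv p1) \<alpha> \<noteq> 0" using \<open>poly p1 \<alpha> = 0\<close> by (auto simp: pd)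
    qed
    have IH: "degree p1 \<le> card {\<alpha>. poly p1 \<alpha> = 0}" using Cons.IH[OF d p10 simp1] .
    have "poly (pderiv p) r \<noteq> 0" using Cons.prems(3) True by blast
    hence r1: "poly p1 r \<noteq> 0" by (simp add: pd)
    have fin: "finite {\<alpha>. poly p \<alpha> = 0}" using poly_roots_finite Cons.prems(2) by blast
    have sub: "insert r {\<alpha>. poly p1 \<alpha> = 0} \<subseteq> {\<alpha>. poly p \<alpha> = 0}" using True by (auto simp: p1)
    have "card (insert r {\<alpha>. poly p1 \<alpha> = 0}) = Suc (card {\<alpha>. poly p1 \<alpha> = 0})"
      using r1 poly_roots_finite[OF p10] by simp
    moreover have "card (insert r {\<alpha>. poly p1 \<alpha> = 0}) \<le> card {\<alpha>. poly p \<alpha> = 0}"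
      using card_mono[OF fin sub] .
    moreover have "degree p = Suc (degree p1)"
    proof -
      have "degree (?L * p1) = degree ?L + degree p1" by (rule degree_mult_eq) (use p10 in simp_all)
      thus ?thesis using p1 by simp
    qed
    ultimately show ?thesis using IH by simp
  next
    case False
    have "poly p r * poly k r = 0" using arg_cong[OF k, of "\<lambda>x. poly x r"] by simp
    hence "poly k r = 0" using False by simp
    then obtain k1 where k1: "k = ?L * k1" using dvd_iff_poly_eq_0[of "-r" k] by (auto elim: dvdE)
    have "?L * ?Q = ?L * (p * k1)" using k k1 by (metis mult.left_commute)
    hence "?Q = p * k1" using mult_left_cancel[of ?L] by simp
    hence "p dvd ?Q" by simp
    thus ?thesis using Cons.IH Cons.prems by blast
  qed
qed

lemma root_key:
  fixes fK GK f0K PK a b :: "'b::field poly"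
  assumes e1: "fK = f0K * GK" and e2: "pderiv fK = PK * GK" and e3: "GK = a * fK + b * pderiv fK"
   and nz: "fK \<noteq> 0" and r: "poly fK \<alpha> = 0" and m0: "of_nat (order \<alpha> fK) \<noteq> (0::'b)"
  shows "poly f0K \<alpha> = 0 \<and> poly PK \<alpha> = of_nat (order \<alpha> fK) * poly (pderiv f0K) \<alpha>
     \<and> poly (pderiv f0K) \<alpha> \<noteq> 0"
proof -
  define m where "m = order \<alpha> fK"
  define L where "L = [:-\<alpha>,1:]"
  have "m \<noteq> 0" using order_root[of fK \<alpha>] r nz m_def by simp
  then obtain k where mk: "m = Suc k" using not0_implies_Suc by blast
  obtain q where q: "fK = L ^ m * q" and nq: "\<not> L dvd q"
    using order_decomp[OF nz] unfolding m_def L_def by blast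
  have q0: "poly q \<alpha> \<noteq> 0" using nq dvd_iff_poly_eq_0[of "-\<alpha>" q] by (simp add: L_def)
  have pL: "pderiv L = 1" by (simp add: L_def pderiv_pCons)
  have dfK: "pderiv fK = L ^ k * (Polynomial.smult (of_nat m) q + L * pderiv q)"
  proof -
    have "pderiv (L ^ Suc k) = Polynomial.smult (of_nat (Suc k)) (L ^ k)"
      by (simp only: pderiv_power_Suc pL mult_1_right)
    hence "pderiv fK = L ^ Suc k * pderiv q + q * Polynomial.smult (of_nat m) (L ^ k)"
      unfolding q mk pderiv_mult by simp
    thus ?thesis by (simp add: algebra_simps)
  qed
  have "L ^ k dvd fK" by (simp add: q mk)
  moreover have "L ^ k dvd pderiv fK" by (simp add: dfK)
  ultimately have "L ^ k dvd GK" by (simp add: e3)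
  then obtain u where u: "GK = L ^ k * u" by (auto elim: dvdE)
  have Lk0: "L ^ k \<noteq> 0" by (simp add: L_def)
  have "L ^ k * (L * q) = L ^ k * (f0K * u)" using e1 q u mk by (simp add: algebra_simps)
  hence E1: "L * q = f0K * u" using Lk0 mult_left_cancel by blast
  have "L ^ k * (Polynomial.smult (of_nat m) q + L * pderiv q) = L ^ k * (PK * u)"
    using e2 dfK u by (metis mult.left_commute)
  hence E2: "Polynomial.smult (of_nat m) q + L * pderiv q = PK * u" using Lk0 mult_left_cancel by blast
  have La: "poly L \<alpha> = 0" by (simp add: L_def)
  have A1: "of_nat m * poly q \<alpha> = poly PK \<alpha> * poly u \<alpha>"
    using arg_cong[OF E2, of "\<lambda>x. poly x \<alpha>"] La by simp
  have A2: "0 = poly f0K \<alpha> * poly u \<alpha>"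
    using arg_cong[OF E1, of "\<lambda>x. poly x \<alpha>"] La by simp
  have "pderiv (L * q) = pderiv (f0K * u)" using E1 by simp
  hence A3: "poly q \<alpha> = poly f0K \<alpha> * poly (pderiv u) \<alpha> + poly u \<alpha> * poly (pderiv f0K) \<alpha>"
  proof -
    assume "pderiv (L * q) = pderiv (f0K * u)"
    hence "L * pderiv q + q = f0K * pderiv u + u * pderiv f0K" by (simp add: pderiv_mult pL)
    from arg_cong[OF this, of "\<lambda>x. poly x \<alpha>"] show ?thesis using La by simp
  qed
  have mm: "(of_nat m :: 'b) \<noteq> 0" using m0 m_def by simp
  have u0: "poly u \<alpha> \<noteq> 0" using A1 mm q0 by auto
  have f0: "poly f0K \<alpha> = 0" using A2 u0 by simp
  have q': "poly q \<alpha> = poly u \<alpha> * poly (pderiv f0K) \<alpha>" using A3 f0 by simp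
  have "poly PK \<alpha> * poly u \<alpha> = (of_nat m * poly (pderiv f0K) \<alpha>) * poly u \<alpha>"
    by (simp only: A1[symmetric] q' mult_ac)
  hence "poly PK \<alpha> = of_nat m * poly (pderiv f0K) \<alpha>" using u0 mult_right_cancel by blast
  thus ?thesis using f0 q' q0 m_def by auto
qed

lemma coord_add: "coord_vec s (p + q) = coord_vec s p + coord_vec s q"
  by (auto simp: coord_vec_def)
lemma coord_smult: "coord_vec s (Polynomial.smult c p) = c \<cdot>\<^sub>v coord_vec s p"
  by (auto simp: coord_vec_def)
lemma coord_carrier[simp]: "coord_vec s p \<in> carrier_vec s"
  by (simp add: coord_vec_def)

lemma deg_less_mod:
  fixes f0 p :: "'a::field poly"
  assumes "degree f0 = s" "s \<ge> 1"
  shows "degree (p mod f0) < s"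
proof -
  have "f0 \<noteq> 0" using assms by auto
  thus ?thesis using degree_mod_less[of f0 p] assms by auto
qed

lemma comp_step:
  fixes f0 p :: "'a::field poly"
  assumes lc: "lead_coeff f0 = 1" and ds: "degree f0 = s" and s1: "s \<ge> 1" and dp: "degree p < s"
  shows "companion_mat f0 *\<^sub>v coord_vec s p = coord_vec s (pCons 0 p mod f0)"
proof -
  define c where "c = coeff p (s - 1)"
  define D where "D = pCons 0 p - Polynomial.smult c f0"
  have cD: "coeff D i = (if i = 0 then 0 else coeff p (i - 1)) - c * coeff f0 i" for i
    by (cases i) (simp_all add: D_def)
  have "degree D \<le> s - 1"
  proof (rule degree_le, intro allI impI)
    fix i assume i: "s - 1 < i"
    show "coeff D i = 0"
    proof (cases "i = s")
      case True thus ?thesis using cD[of i] lc ds s1 by (simp add: c_def)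
    next
      case False
      hence "i > s" using i by simp
      hence "coeff p (i - 1) = 0" "coeff f0 i = 0" using dp ds by (auto intro!: coeff_eq_0)
      thus ?thesis using cD[of i] i by simp
    qed
  qed
  hence dD: "degree D < degree f0" using ds s1 by simp
  have "pCons 0 p mod f0 = (D + f0 * [:c:]) mod f0" by (simp add: D_def)
  also have "\<dots> = D mod f0" by (rule mod_mult_self2)
  also have "\<dots> = D" using mod_poly_less[OF dD] .
  finally have md: "pCons 0 p mod f0 = D" .
  show ?thesis
  proof (rule eq_vecI)
    show "dim_vec (companion_mat f0 *\<^sub>v coord_vec s p) = dim_vec (coord_vec s (pCons 0 p mod f0))"
      by (simp add: companion_mat_def ds coord_vec_def Let_def)
    fix i assume "i < dim_vec (coord_vec s (pCons 0 p mod f0))"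
    hence i: "i < s" by (simp add: coord_vec_def)
    have "(companion_mat f0 *\<^sub>v coord_vec s p) $ i =
      (\<Sum>j\<in>{0..<s}. (if j = s - 1 then - coeff f0 i else if i = j + 1 then 1 else 0) * coeff p j)"
      using i by (simp add: companion_mat_def ds Let_def coord_vec_def scalar_prod_def)
    also have "{0..<s} = insert (s - 1) {0..<s - 1}" using s1 by auto
    also have "(\<Sum>j\<in>insert (s - 1) {0..<s - 1}. (if j = s - 1 then - coeff f0 i else if i = j + 1 then 1 else 0) * coeff p j)
       = (if s - 1 = s - 1 then - coeff f0 i else if i = s - 1 + 1 then 1 else 0) * coeff p (s - 1)
         + (\<Sum>j\<in>{0..<s - 1}. (if j = s - 1 then - coeff f0 i else if i = j + 1 then 1 else 0) * coeff p j)"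
      by (rule sum.insert) auto
    also have "(\<Sum>j\<in>{0..<s - 1}. (if j = s - 1 then - coeff f0 i else if i = j + 1 then 1 else 0) * coeff p j)
       = (\<Sum>j\<in>{0..<s - 1}. (if i \<noteq> 0 \<and> j = i - 1 then coeff p j else 0))"
      by (rule sum.cong) auto
    also have "(\<Sum>j\<in>{0..<s - 1}. (if i \<noteq> 0 \<and> j = i - 1 then coeff p j else 0)) = (if i = 0 then 0 else coeff p (i - 1))"
      using i by (cases "i = 0") auto
    also have "(if s - 1 = s - 1 then - coeff f0 i else if i = s - 1 + 1 then 1 else 0) * coeff p (s - 1) = - coeff f0 i * c"
      by (simp add: c_def)
    finally have lhs: "(companion_mat f0 *\<^sub>v coord_vec s p) $ i = - coeff f0 i * c + (if i = 0 then 0 else coeff p (i - 1))" .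
    have cv: "coord_vec s (pCons 0 p mod f0) $ i = coeff D i" using i by (simp add: md coord_vec_def)
    have gen: "\<And>y x::'a. y - c * x = - x * c + y" by (simp add: algebra_simps)
    show "(companion_mat f0 *\<^sub>v coord_vec s p) $ i = coord_vec s (pCons 0 p mod f0) $ i"
      by (simp only: lhs cv cD gen)
  qed
qed

lemma horner:
  fixes f0 g :: "'a::field poly"
  assumes lc: "lead_coeff f0 = 1" and ds: "degree f0 = s" and s1: "s \<ge> 1" and dg: "degree g < s"
  shows "foldr (\<lambda>c M. c \<cdot>\<^sub>m 1\<^sub>m s + companion_mat f0 * M) cs (0\<^sub>m s s) \<in> carrier_mat s s \<and>
    foldr (\<lambda>c M. c \<cdot>\<^sub>m 1\<^sub>m s + companion_mat f0 * M) cs (0\<^sub>m s s) *\<^sub>v coord_vec s g = coord_vec s ((Poly cs * g) mod f0)"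
proof (induction cs)
  case Nil
  show ?case by (auto simp: coord_vec_def)
next
  case (Cons c cs)
  let ?M = "foldr (\<lambda>c M. c \<cdot>\<^sub>m 1\<^sub>m s + companion_mat f0 * M) cs (0\<^sub>m s s)"
  let ?C = "companion_mat f0"
  have Cc: "?C \<in> carrier_mat s s" by (simp add: companion_mat_def ds Let_def)
  have Mc: "?M \<in> carrier_mat s s" using Cons.IH by blast
  have IH: "?M *\<^sub>v coord_vec s g = coord_vec s ((Poly cs * g) mod f0)" using Cons.IH by blast
  have car: "c \<cdot>\<^sub>m 1\<^sub>m s + ?C * ?M \<in> carrier_mat s s" using Cc Mc by auto
  have "(c \<cdot>\<^sub>m 1\<^sub>m s + ?C * ?M) *\<^sub>v coord_vec s g = (c \<cdot>\<^sub>m 1\<^sub>m s) *\<^sub>v coord_vec s g + (?C * ?M) *\<^sub>v coord_vec s g"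
    by (rule add_mult_distrib_mat_vec[of _ s s]) (use Cc Mc in auto)
  also have "(c \<cdot>\<^sub>m 1\<^sub>m s) *\<^sub>v coord_vec s g = c \<cdot>\<^sub>v coord_vec s g"
  proof (intro eq_vecI)
    fix i assume "i < dim_vec (c \<cdot>\<^sub>v coord_vec s g)"
    hence i: "i < s" by (simp add: coord_vec_def)
    have "(\<Sum>ia = 0..<s. c * (if ia = i then 1 else 0) * coeff g ia) = (\<Sum>ia = 0..<s. if ia = i then c * coeff g ia else 0)"
      by (rule sum.cong) auto
    also have "\<dots> = c * coeff g i" using i by simp
    finally show "((c \<cdot>\<^sub>m 1\<^sub>m s) *\<^sub>v coord_vec s g) $ i = (c \<cdot>\<^sub>v coord_vec s g) $ i"
      using i by (simp add: coord_vec_def scalar_prod_def)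
  qed (simp add: coord_vec_def)
  also have "(?C * ?M) *\<^sub>v coord_vec s g = ?C *\<^sub>v coord_vec s ((Poly cs * g) mod f0)"
    using Cc Mc IH by simp
  also have "\<dots> = coord_vec s (pCons 0 ((Poly cs * g) mod f0) mod f0)"
    by (rule comp_step[OF lc ds s1 deg_less_mod[OF ds s1]])
  also have "pCons 0 ((Poly cs * g) mod f0) mod f0 = pCons 0 (Poly cs * g) mod f0"
  proof -
    have "pCons 0 ((Poly cs * g) mod f0) = [:0,1:] * ((Poly cs * g) mod f0)" by simp
    moreover have "pCons 0 (Poly cs * g) = [:0,1:] * (Poly cs * g)" by simp
    ultimately show ?thesis by (metis mod_mult_right_eq)
  qed
  also have "c \<cdot>\<^sub>v coord_vec s g = coord_vec s (Polynomial.smult c g mod f0)"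
  proof -
    have "degree (Polynomial.smult c g) < degree f0" using dg ds by (simp add: le_less_trans[OF degree_smult_le])
    thus ?thesis by (simp add: mod_poly_less coord_smult)
  qed
  also have "coord_vec s (Polynomial.smult c g mod f0) + coord_vec s (pCons 0 (Poly cs * g) mod f0)
     = coord_vec s ((Poly (c # cs) * g) mod f0)"
    by (simp only: coord_add[symmetric] poly_mod_add_left Poly.simps mult_pCons_left)
  finally show ?case using car by simp
qed

lemma poly_mat_eval_comp:
  fixes f0 g R :: "'a::field poly"
  assumes lc: "lead_coeff f0 = 1" and ds: "degree f0 = s" and s1: "s \<ge> 1" and dg: "degree g < s"
  shows "poly_mat_eval R s (companion_mat f0) *\<^sub>v coord_vec s g = coord_vec s ((R * g) mod f0)"
  using horner[OF assms, of "coeffs R"] unfolding poly_mat_eval_def by simp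

lemma norm_field: "(c::'a::field_gcd) \<noteq> 0 \<Longrightarrow> normalize c = 1"
  by (rule is_unit_normalize) (simp add: dvd_field_iff)
lemma lc_gcd: "f \<noteq> 0 \<Longrightarrow> lead_coeff (gcd f g) = (1::'a::{field_char_0,field_gcd})"
proof -
  assume "f \<noteq> 0"
  hence "unit_factor (gcd f g) = 1" by (simp add: unit_factor_gcd)
  hence "[:unit_factor (lead_coeff (gcd f g)):] = [:1:]" by (simp add: unit_factor_poly_def)
  hence u: "unit_factor (lead_coeff (gcd f g)) = 1" by (simp only: pCons_eq_iff)
  have "gcd f g \<noteq> 0" using \<open>f \<noteq> 0\<close> by simp
  hence "lead_coeff (gcd f g) \<noteq> 0" by (simp only: leading_coeff_0_iff not_False_eq_True)
  hence "normalize (lead_coeff (gcd f g)) = 1" by (rule norm_field)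
  thus ?thesis using u unit_factor_mult_normalize[of "lead_coeff (gcd f g)"] by simp
qed
theorem theorem2p1:
  fixes f :: "'a::{field_char_0,field_gcd} poly" and \<phi> :: "'a \<Rightarrow> 'b::field"
  assumes monic: "lead_coeff f = 1"
    and deg: "degree f \<ge> 1"
    and split: "is_splitting_field \<phi> f"
  defines "f0 \<equiv> f div gcd f (pderiv f)"
    and "s \<equiv> degree (f div gcd f (pderiv f))"
    and "P \<equiv> pderiv f div gcd f (pderiv f)"
  shows "(\<exists>!gh. degree (fst gh) < s \<and> pderiv f0 * fst gh + f0 * snd gh = 1)
    \<and> (\<forall>g h (M :: 'b poly).
         degree g < s \<and> pderiv f0 * g + f0 * h = 1
         \<and> degree M < card (root_set \<phi> f)
         \<and> (\<forall>\<alpha>\<in>root_set \<phi> f. poly M \<alpha> = of_nat (order \<alpha> (map_poly \<phi> f)))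
         \<longrightarrow> coord_vec s M = map_vec \<phi> (poly_mat_eval P s (companion_mat f0) *\<^sub>v coord_vec s g))"
proof -
  have ifh: "is_field_hom \<phi>" using split unfolding is_splitting_field_def by blast
  interpret h: field_hom \<phi> by (rule fh[OF ifh])
  obtain rs where rs0: "map_poly \<phi> f = Polynomial.smult (\<phi> (lead_coeff f)) (\<Prod>r\<leftarrow>rs. [:- r, 1:])"
    using split unfolding is_splitting_field_def by blast
  define fK where "fK = map_poly \<phi> f"
  have rs: "fK = (\<Prod>r\<leftarrow>rs. [:- r, 1:])" using rs0 monic by (simp add: fK_def)
  define G where "G = gcd f (pderiv f)"
  have f0: "f \<noteq> 0" using deg by auto
  have G0: "G \<noteq> 0" using f0 by (simp add: G_def)
  have fG: "f = G * f0" unfolding f0_def G_def by simp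
  have pG: "pderiv f = G * P" unfolding P_def G_def by simp
  have sdef: "s = degree f0" by (simp add: s_def f0_def)
  obtain a b where ab: "a * f + b * pderiv f = G"
    using bezout_coefficients_fst_snd[of f "pderiv f"] unfolding G_def by blast
  have lcG: "lead_coeff G = 1" unfolding G_def by (rule lc_gcd[OF f0])
  have lcf0: "lead_coeff f0 = 1" using monic fG lcG by (simp add: lead_coeff_mult)
  define f0K where "f0K = map_poly \<phi> f0"
  define GK where "GK = map_poly \<phi> G"
  define PK where "PK = map_poly \<phi> P"
  have e1: "fK = f0K * GK" unfolding fK_def f0K_def GK_def by (subst fG) (simp add: h.mp_mult mult.commute)
  have e2: "pderiv fK = PK * GK" unfolding fK_def PK_def GK_def
    by (simp add: h.mp_pderiv[symmetric] pG h.mp_mult mult.commute)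
  have e3: "GK = map_poly \<phi> a * fK + map_poly \<phi> b * pderiv fK"
    unfolding GK_def fK_def by (simp add: ab[symmetric] h.mp_add h.mp_mult h.mp_pderiv)
  have dfKf: "degree fK = degree f" by (simp add: fK_def h.mp_deg)
  hence fK0: "fK \<noteq> 0" using deg by auto
  have S_def: "root_set \<phi> f = {\<alpha>. poly fK \<alpha> = 0}" by (simp add: root_set_def fK_def)
  have key: "poly f0K \<alpha> = 0 \<and> poly PK \<alpha> = of_nat (order \<alpha> fK) * poly (pderiv f0K) \<alpha>
     \<and> poly (pderiv f0K) \<alpha> \<noteq> 0" if r: "poly fK \<alpha> = 0" for \<alpha>
  proof (rule root_key[OF e1 e2 e3 fK0 r])
    have "order \<alpha> fK \<noteq> 0" using order_root[of fK \<alpha>] r fK0 by simp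
    hence "(of_nat (order \<alpha> fK) :: 'a) \<noteq> 0" by simp
    hence "\<phi> (of_nat (order \<alpha> fK)) \<noteq> 0" by (simp add: h.hom_eq0)
    thus "(of_nat (order \<alpha> fK) :: 'b) \<noteq> 0" by (simp add: h.hom_of_nat)
  qed
  have pf0K: "pderiv f0K = map_poly \<phi> (pderiv f0)" by (simp add: f0K_def h.mp_pderiv)
  obtain r0 where r0: "poly fK r0 = 0"
  proof (cases rs)
    case Nil
    hence "degree fK = 0" using rs by simp
    moreover have "degree fK = degree f" by (simp add: fK_def h.mp_deg)
    ultimately show ?thesis using deg by simp
  next
    case (Cons r rs')
    show ?thesis by (rule that[of r]) (simp add: rs Cons)
  qed
  have f0Kne: "f0K \<noteq> 0" using key[OF r0] by auto
  have s1: "s \<ge> 1"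
  proof (rule ccontr)
    assume "\<not> s \<ge> 1"
    hence "degree f0 = 0" by (simp add: sdef)
    hence "pderiv f0 = 0" by (simp add: pderiv_eq_0_iff)
    hence "pderiv f0K = 0" by (simp add: pf0K)
    thus False using key[OF r0] by simp
  qed
  have f0ne: "f0 \<noteq> 0" using f0Kne by (auto simp: f0K_def)
  have cop: "coprime f0 (pderiv f0)"
  proof (rule ccontr)
    assume "\<not> coprime f0 (pderiv f0)"
    then obtain d where d1: "d dvd f0" and d2: "d dvd pderiv f0" and du: "\<not> is_unit d"
      by (rule not_coprimeE)
    have d0: "d \<noteq> 0" using d1 f0ne by auto
    have dd: "degree d \<noteq> 0" using du is_unit_iff_degree[OF d0] by simp
    define dK where "dK = map_poly \<phi> d"
    have dK0: "dK \<noteq> 0" using dd h.mp_deg[of d] unfolding dK_def by auto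
    have dKf: "dK dvd f0K" unfolding dK_def f0K_def by (rule h.mp_dvd[OF d1])
    have dKp: "dK dvd pderiv f0K" unfolding dK_def pf0K by (rule h.mp_dvd[OF d2])
    have "dK dvd fK" using dKf e1 by simp
    hence dKr: "dK dvd (\<Prod>r\<leftarrow>rs. [:- r, 1:])" using rs by simp
    show False
    proof (cases "\<exists>\<alpha>. poly dK \<alpha> = 0")
      case True
      then obtain \<alpha> where a: "poly dK \<alpha> = 0" by blast
      have "poly f0K \<alpha> = 0" using a dKf by (auto elim!: dvdE)
      hence "poly fK \<alpha> = 0" using e1 by simp
      moreover have "poly (pderiv f0K) \<alpha> = 0" using a dKp by (auto elim!: dvdE)
      ultimately show False using key by blast
    next
      case False
      hence "degree dK \<le> card {\<alpha>. poly dK \<alpha> = 0}" using split_deg_le[OF dKr dK0] by blast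
      thus False using False dd by (simp add: dK_def h.mp_deg)
    qed
  qed
  obtain a' b' where ab': "a' * pderiv f0 + b' * f0 = 1"
    using bezout_coefficients_fst_snd[of "pderiv f0" f0] coprime_imp_gcd_eq_1[OF cop]
    by (metis gcd.commute)
  have part1: "\<exists>!gh. degree (fst gh) < s \<and> pderiv f0 * fst gh + f0 * snd gh = 1"
  proof (rule ex_ex1I)
    show "\<exists>gh. degree (fst gh) < s \<and> pderiv f0 * fst gh + f0 * snd gh = 1"
    proof (intro exI conjI)
      show "degree (fst (a' mod f0, b' + (a' div f0) * pderiv f0)) < s"
        using deg_less_mod[OF sdef[symmetric] s1] by simp
      have "pderiv f0 * (a' mod f0) + f0 * (b' + (a' div f0) * pderiv f0)
          = pderiv f0 * (a' mod f0 + f0 * (a' div f0)) + b' * f0" by (simp only: distrib_left mult_ac add_ac)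
      also have "\<dots> = pderiv f0 * a' + b' * f0" by (simp only: mod_mult_div_eq)
      also have "\<dots> = 1" using ab' by (simp add: mult.commute)
      finally show "pderiv f0 * fst (a' mod f0, b' + (a' div f0) * pderiv f0)
         + f0 * snd (a' mod f0, b' + (a' div f0) * pderiv f0) = 1" by simp
    qed
  next
    fix x y
    assume x: "degree (fst x) < s \<and> pderiv f0 * fst x + f0 * snd x = 1"
      and y: "degree (fst y) < s \<and> pderiv f0 * fst y + f0 * snd y = 1"
    have eq: "pderiv f0 * (fst x - fst y) = f0 * (snd y - snd x)"
      using x y by (simp add: algebra_simps)
    hence "f0 dvd pderiv f0 * (fst x - fst y)" by simp
    hence dv: "f0 dvd (fst x - fst y)" using cop coprime_dvd_mult_right_iff by blast
    have "fst x - fst y = 0"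
    proof (rule ccontr)
      assume ne: "fst x - fst y \<noteq> 0"
      have "degree f0 \<le> degree (fst x - fst y)" by (rule dvd_imp_degree_le[OF dv ne])
      moreover have "degree (fst x - fst y) < s"
        using x y degree_diff_le_max[of "fst x" "fst y"] by linarith
      ultimately show False using sdef by simp
    qed
    hence "f0 * (snd y - snd x) = 0" using eq by simp
    hence "snd y - snd x = 0" using f0ne by simp
    thus "x = y" using \<open>fst x - fst y = 0\<close> by (simp add: prod_eq_iff)
  qed
  have finS: "finite {\<alpha>. poly fK \<alpha> = 0}" using poly_roots_finite[OF fK0] .
  have sS: "s \<le> card {\<alpha>. poly fK \<alpha> = 0}"
  proof -
    have "f0K dvd (\<Prod>r\<leftarrow>rs. [:- r, 1:])" using e1 rs by (metis dvd_triv_left)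
    moreover have "\<forall>\<alpha>. poly f0K \<alpha> = 0 \<longrightarrow> poly (pderiv f0K) \<alpha> \<noteq> 0"
      using key e1 by simp
    ultimately have "degree f0K \<le> card {\<alpha>. poly f0K \<alpha> = 0}" using split_deg_le f0Kne by blast
    also have "\<dots> \<le> card {\<alpha>. poly fK \<alpha> = 0}" by (rule card_mono[OF finS]) (auto simp: e1)
    finally show ?thesis by (simp add: sdef f0K_def h.mp_deg)
  qed
  have part2: "coord_vec s M = map_vec \<phi> (poly_mat_eval P s (companion_mat f0) *\<^sub>v coord_vec s g)"
    if g: "degree g < s" and gh: "pderiv f0 * g + f0 * h = 1"
      and dM: "degree M < card (root_set \<phi> f)"
      and vM: "\<forall>\<alpha>\<in>root_set \<phi> f. poly M \<alpha> = of_nat (order \<alpha> (map_poly \<phi> f))"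
    for g h and M :: "'b poly"
  proof -
    define R where "R = (P * g) mod f0"
    define RK where "RK = map_poly \<phi> R"
    have "poly_mat_eval P s (companion_mat f0) *\<^sub>v coord_vec s g = coord_vec s R"
      unfolding R_def by (rule poly_mat_eval_comp[OF lcf0 sdef[symmetric] s1 g])
    moreover have "map_vec \<phi> (coord_vec s R) = coord_vec s RK"
      by (auto simp: coord_vec_def RK_def coeff_map_poly)
    moreover have "M = RK"
    proof -
      have vals: "poly RK \<alpha> = poly M \<alpha>" if a: "poly fK \<alpha> = 0" for \<alpha>
      proof -
        have "map_poly \<phi> ((P * g div f0) * f0 + R) = map_poly \<phi> (P * g)"
          unfolding R_def div_mult_mod_eq ..
        hence "PK * map_poly \<phi> g = map_poly \<phi> (P * g div f0) * f0K + RK"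
          unfolding RK_def f0K_def PK_def h.mp_add h.mp_mult by simp
        from arg_cong[OF this, of "\<lambda>x. poly x \<alpha>"]
        have "poly RK \<alpha> = poly PK \<alpha> * poly (map_poly \<phi> g) \<alpha>" using key[OF a] by simp
        moreover have "map_poly \<phi> (pderiv f0 * g + f0 * h) = 1" using gh by simp
        hence "pderiv f0K * map_poly \<phi> g + f0K * map_poly \<phi> h = 1"
          unfolding h.mp_add h.mp_mult h.mp_pderiv f0K_def .
        from arg_cong[OF this, of "\<lambda>x. poly x \<alpha>"]
        have "poly (pderiv f0K) \<alpha> * poly (map_poly \<phi> g) \<alpha> = 1" using key[OF a] by simp
        ultimately have "poly RK \<alpha> = of_nat (order \<alpha> fK)" using key[OF a]
          by (simp add: mult.assoc)
        thus ?thesis using vM a S_def fK_def by simp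
      qed
      show ?thesis
      proof (rule ccontr)
        assume ne: "M \<noteq> RK"
        hence ne': "M - RK \<noteq> 0" by simp
        have "{\<alpha>. poly fK \<alpha> = 0} \<subseteq> {x. poly (M - RK) x = 0}" using vals by auto
        hence "card {\<alpha>. poly fK \<alpha> = 0} \<le> card {x. poly (M - RK) x = 0}"
          by (rule card_mono[OF poly_roots_finite[OF ne']])
        also have "\<dots> \<le> degree (M - RK)" by (rule card_poly_roots_bound[OF ne'])
        also have "\<dots> \<le> max (degree M) (degree RK)" by (rule degree_diff_le_max)
        also have "\<dots> < card {\<alpha>. poly fK \<alpha> = 0}"
        proof -
          have "degree RK = degree R" by (simp add: RK_def h.mp_deg)
          moreover have "degree R < s" unfolding R_def by (rule deg_less_mod[OF sdef[symmetric] s1])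
          ultimately show ?thesis using dM sS S_def by simp
        qed
        finally show False by simp
      qed
    qed
    ultimately show ?thesis by simp
  qed
  show ?thesis using part1 part2 by blast
qed

end
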